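(* Let $V$ be a vector configuration with $\mathrm{DD}(V)>0$. Then there is a subconfiguration $W\subseteq V$ of rank $1$ with $\operatorname{lin}(W)\cap V=W$ and $\mathrm{DD}(W)>0$ such that $\mathrm{DD}(V)=\mathrm{DD}(W)+\mathrm{DD}(V/W)$.
   Context: A vector configuration is a finite family (repetitions allowed) $U$ of vectors in a real vector space $E$; a subconfiguration is a subfamily, $\operatorname{rank}(U)=\dim\operatorname{lin}(U)$, cardinalities count multiplicities; $\operatorname{lin}(W)\cap V=W$ means the elements of $V$ lying in $\operatorname{lin}(W)$ are exactly those of $W$. The quotient $V/W$ is the configuration in $E/\operatorname{lin}(W)$ of the images of the elements of $V\setminus W$. Covector discrepancy: $\mathrm{DD}(U)=\max_f\big|\,|\{u\in U: f(u)>0\}|-|\{u\in U:f(u)<0\}|\,\big|$ over all linear functionals $f$ on $E$. *)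

theory Defs
  imports "HOL-Analysis.Analysis"
begin

text \<open>A vector configuration is a finite family: a finite index set I together with
  v :: 'i => 'a, so repetitions are allowed. A subconfiguration is given by J \<subseteq> I.\<close>

definition imbalance :: "'i set \<Rightarrow> ('i \<Rightarrow> 'a) \<Rightarrow> ('a \<Rightarrow> real) \<Rightarrow> int" where
  "imbalance I v f = \<bar>int (card {i\<in>I. f (v i) > 0}) - int (card {i\<in>I. f (v i) < 0})\<bar>"

definition DD :: "'i set \<Rightarrow> ('i \<Rightarrow> 'a::real_vector) \<Rightarrow> int" where
  "DD I v = Max {imbalance I v f | f. linear f}"

definition config_rank :: "'i set \<Rightarrow> ('i \<Rightarrow> 'a::real_vector) \<Rightarrow> nat" where
  "config_rank I v = dim (span (v ` I))"

text \<open>DD of the quotient V/W: the configuration of images of the elements of V \ W in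
  E / lin(W). Linear functionals on E / lin(W) are exactly the linear functionals on E
  vanishing on lin(W) (composed with the projection), and the sign of g at the image of u
  equals the sign of g o pi at u.\<close>
definition DD_quot :: "'i set \<Rightarrow> ('i \<Rightarrow> 'a::real_vector) \<Rightarrow> 'i set \<Rightarrow> int" where
  "DD_quot I v J = Max {imbalance (I - J) v f | f. linear f \<and> (\<forall>x\<in>span (v ` J). f x = 0)}"

end

theory Submission
  imports Defs
begin


definition sgi :: "real \<Rightarrow> int" where
  "sgi x = (if x > 0 then 1 else if x < 0 then -1 else 0)"

definition SS :: "'i set \<Rightarrow> ('i \<Rightarrow> 'a) \<Rightarrow> ('a \<Rightarrow> real) \<Rightarrow> int" where
  "SS K v f = (\<Sum>i\<in>K. sgi (f (v i)))"

lemma sgi_0[simp]: "sgi 0 = 0" by (simp add: sgi_def)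
lemma sgi_neg: "sgi (- x) = - sgi x" by (simp add: sgi_def)
lemma sgi_mult: "sgi (a * b) = sgi a * sgi b"
  by (auto simp: sgi_def mult_pos_neg mult_neg_pos mult_neg_neg zero_less_mult_iff mult_less_0_iff)
lemma sgi_eq0[simp]: "sgi x = 0 \<longleftrightarrow> x = 0" by (simp add: sgi_def)

lemma card_filter_sum: "finite K \<Longrightarrow> int (card {i\<in>K. P i}) = (\<Sum>i\<in>K. if P i then 1 else 0)"
  by (simp add: sum.inter_filter[symmetric])

lemma imb_SS: assumes "finite K" shows "imbalance K v f = \<bar>SS K v f\<bar>"
proof -
  have "SS K v f = (\<Sum>i\<in>K. (if f (v i) > 0 then 1 else 0) - (if f (v i) < 0 then 1 else (0::int)))"
    unfolding SS_def by (rule sum.cong) (auto simp: sgi_def)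
  also have "\<dots> = int (card {i\<in>K. f (v i) > 0}) - int (card {i\<in>K. f (v i) < 0})"
    by (simp add: sum_subtractf card_filter_sum[OF assms])
  finally show ?thesis by (simp add: imbalance_def)
qed

lemma SS_neg: "SS K v (\<lambda>x. - f x) = - SS K v f"
  by (simp add: SS_def sgi_neg sum_negf)

lemma imb_le: assumes "finite K" shows "imbalance K v f \<le> int (card K)"
proof -
  have "card {i\<in>K. f (v i) > 0} \<le> card K" "card {i\<in>K. f (v i) < 0} \<le> card K"
    by (auto intro: card_mono assms)
  then show ?thesis unfolding imbalance_def by linarith
qed

lemma max_imb:
  assumes "finite K" "P (\<lambda>x. 0)"
  shows "P f \<Longrightarrow> imbalance K v f \<le> Max {imbalance K v f | f. P f}"
    and "\<exists>f. P f \<and> Max {imbalance K v f | f. P f} = imbalance K v f"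
proof -
  have sub: "{imbalance K v f | f. P f} \<subseteq> {0..int (card K)}"
    using imb_le[OF assms(1)] by (auto simp: imbalance_def)
  then have fin: "finite {imbalance K v f | f. P f}" by (rule finite_subset) simp
  have ne: "{imbalance K v f | f. P f} \<noteq> {}" using assms(2) by blast
  show "P f \<Longrightarrow> imbalance K v f \<le> Max {imbalance K v f | f. P f}"
    using fin by (intro Max_ge) auto
  from Max_in[OF fin ne] show "\<exists>f. P f \<and> Max {imbalance K v f | f. P f} = imbalance K v f"
    by auto
qed

lemma lin_comb: "linear F \<Longrightarrow> linear G \<Longrightarrow> linear (\<lambda>x. F x + c * (G x :: real))"
proof -
  assume F: "linear F" and G: "linear G"
  show ?thesis unfolding linear_iff
    using linear_add[OF F] linear_add[OF G] linear_scale[OF F] linear_scale[OF G]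
    by (simp add: algebra_simps)
qed

lemma DD_ge: "finite I \<Longrightarrow> linear f \<Longrightarrow> imbalance I v f \<le> DD I v"
  unfolding DD_def by (rule max_imb(1)) (auto simp: linear_zero)

lemma DD_ex: "finite I \<Longrightarrow> \<exists>f. linear f \<and> DD I v = imbalance I v f"
  unfolding DD_def by (rule max_imb(2)) (auto simp: linear_zero)

lemma DDq_ge: fixes v :: "'i \<Rightarrow> 'a::real_vector" assumes "finite I" "linear f" "\<forall>x\<in>span (v ` J). f x = 0"
  shows "imbalance (I - J) v f \<le> DD_quot I v J"
proof -
  let ?P = "\<lambda>f::'a\<Rightarrow>real. linear f \<and> (\<forall>x\<in>span (v ` J). f x = 0)"
  have "?P (\<lambda>x. 0)" by (simp add: linear_zero)
  from max_imb(1)[of "I - J" ?P f v, OF _ this] assms show ?thesis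
    unfolding DD_quot_def by blast
qed

lemma DDq_ex: fixes v :: "'i \<Rightarrow> 'a::real_vector" assumes "finite I"
  shows "\<exists>f. (linear f \<and> (\<forall>x\<in>span (v ` J). f x = 0)) \<and> DD_quot I v J = imbalance (I - J) v f"
proof -
  let ?P = "\<lambda>f::'a\<Rightarrow>real. linear f \<and> (\<forall>x\<in>span (v ` J). f x = 0)"
  have "?P (\<lambda>x. 0)" by (simp add: linear_zero)
  from max_imb(2)[of "I - J" ?P v, OF _ this] assms show ?thesis
    unfolding DD_quot_def by blast
qed

lemma ex_fun:
  fixes w x :: "'a::real_vector"
  assumes "x \<notin> span {w}"
  shows "\<exists>F::'a\<Rightarrow>real. linear F \<and> F w = 0 \<and> F x \<noteq> 0"
proof (cases "w = 0")
  case True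
  then have "x \<noteq> 0" using assms by auto
  then have "independent {x}" by simp
  from real_vector.linear_independent_extend[OF this, of "\<lambda>_. 1::real"]
  obtain g :: "'a \<Rightarrow> real" where "linear g" "g x = 1" by auto
  then show ?thesis using True by (auto simp: linear_0)
next
  case False
  have "independent {x, w}"
    using assms False by (simp add: real_vector.independent_insert)
  from real_vector.linear_independent_extend[OF this, of "\<lambda>y. if y = x then 1 else (0::real)"]
  obtain g :: "'a \<Rightarrow> real" where "linear g" "\<forall>y\<in>{x,w}. g y = (if y = x then 1 else 0)" by blast
  moreover have "x \<noteq> w" using assms by (auto simp: span_base)
  ultimately show ?thesis by auto
qed

lemma avoid:
  fixes Q :: "('a \<Rightarrow> real) \<Rightarrow> bool"
  assumes "finite S" "Q (\<lambda>x. 0)" "\<And>F G c. Q F \<Longrightarrow> Q G \<Longrightarrow> Q (\<lambda>x. F x + c * G x)"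
    "\<forall>x\<in>S. \<exists>F. Q F \<and> F x \<noteq> 0"
  shows "\<exists>F. Q F \<and> (\<forall>x\<in>S. F x \<noteq> 0)"
  using assms(1,4)
proof (induction S rule: finite_induct)
  case empty then show ?case using assms(2) by auto
next
  case (insert x S)
  then obtain F where F: "Q F" "\<forall>y\<in>S. F y \<noteq> 0" by auto
  from insert obtain G where G: "Q G" "G x \<noteq> 0" by auto
  have "finite ((\<lambda>y. - F y / G y) ` insert x S)" using insert by auto
  then obtain c :: real where c: "c \<notin> (\<lambda>y. - F y / G y) ` insert x S"
    using ex_new_if_finite[OF infinite_UNIV_char_0] by blast
  have "\<forall>y\<in>insert x S. F y + c * G y \<noteq> 0"
  proof
    fix y assume y: "y \<in> insert x S"
    show "F y + c * G y \<noteq> 0"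
    proof (cases "G y = 0")
      case True
      then have "y \<in> S" using y G by auto
      then show ?thesis using True F by auto
    next
      case False
      have "c \<noteq> - F y / G y" using c y by auto
      then show ?thesis using False by (auto simp: field_simps)
    qed
  qed
  then show ?case using assms(3)[OF F(1) G(1)] by blast
qed

lemma perturb_eps:
  assumes "finite K"
  shows "\<exists>\<epsilon>>0. \<forall>i\<in>K. g (v i) \<noteq> (0::real) \<longrightarrow> \<epsilon> * \<bar>k (v i)\<bar> < \<bar>g (v i)\<bar>"
  using assms
proof (induction K rule: finite_induct)
  case empty then show ?case by (auto intro: exI[of _ 1])
next
  case (insert j K)
  then obtain e where e: "e > 0" "\<forall>i\<in>K. g (v i) \<noteq> 0 \<longrightarrow> e * \<bar>k (v i)\<bar> < \<bar>g (v i)\<bar>" by auto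
  define e' where "e' = min e (\<bar>g (v j)\<bar> / (\<bar>k (v j)\<bar> + 1))"
  show ?case
  proof (cases "g (v j) = 0")
    case True
    have "\<forall>i\<in>insert j K. g (v i) \<noteq> 0 \<longrightarrow> e * \<bar>k (v i)\<bar> < \<bar>g (v i)\<bar>"
      using e(2) True by blast
    then show ?thesis using e(1) by blast
  next
    case False
    have pos: "e' > 0" using e False by (simp add: e'_def)
    have "e' * \<bar>k (v j)\<bar> \<le> \<bar>g (v j)\<bar> / (\<bar>k (v j)\<bar> + 1) * \<bar>k (v j)\<bar>"
      by (intro mult_right_mono) (simp_all add: e'_def)
    also have "\<dots> = \<bar>g (v j)\<bar> * (\<bar>k (v j)\<bar> / (\<bar>k (v j)\<bar> + 1))" by simp
    also have "\<dots> < \<bar>g (v j)\<bar> * 1"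
      using False by (intro mult_strict_left_mono) simp_all
    also have "\<dots> = \<bar>g (v j)\<bar>" by simp
    finally have 1: "e' * \<bar>k (v j)\<bar> < \<bar>g (v j)\<bar>" .
    have "\<forall>i\<in>K. g (v i) \<noteq> 0 \<longrightarrow> e' * \<bar>k (v i)\<bar> < \<bar>g (v i)\<bar>"
    proof (intro ballI impI)
      fix i assume "i \<in> K" "g (v i) \<noteq> 0"
      then have "e * \<bar>k (v i)\<bar> < \<bar>g (v i)\<bar>" using e(2) by blast
      moreover have "e' * \<bar>k (v i)\<bar> \<le> e * \<bar>k (v i)\<bar>" by (intro mult_right_mono) (simp_all add: e'_def)
      ultimately show "e' * \<bar>k (v i)\<bar> < \<bar>g (v i)\<bar>" by linarith
    qed
    then have "\<forall>i\<in>insert j K. g (v i) \<noteq> 0 \<longrightarrow> e' * \<bar>k (v i)\<bar> < \<bar>g (v i)\<bar>"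
      using 1 by blast
    then show ?thesis using pos by blast
  qed
qed

lemma sgi_pert:
  assumes "\<epsilon> > 0" "g \<noteq> 0 \<longrightarrow> \<epsilon> * \<bar>k\<bar> < \<bar>g\<bar>"
  shows "sgi (g + \<epsilon> * k) = (if g \<noteq> 0 then sgi g else sgi k)"
proof (cases "g = 0")
  case True
  have "sgi \<epsilon> = 1" using assms(1) by (simp add: sgi_def)
  then have "sgi (\<epsilon> * k) = sgi k" by (simp add: sgi_mult)
  then show ?thesis using True by simp
next
  case False
  have "\<bar>\<epsilon> * k\<bar> < \<bar>g\<bar>" using assms False by (simp add: abs_mult)
  then have "(g + \<epsilon> * k > 0 \<longleftrightarrow> g > 0) \<and> (g + \<epsilon> * k < 0 \<longleftrightarrow> g < 0)" by linarith
  then have "sgi (g + \<epsilon> * k) = sgi g" unfolding sgi_def by simp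
  then show ?thesis using False by simp
qed

lemma zero_on_span: "linear (F::'a::real_vector \<Rightarrow> real) \<Longrightarrow> F w = 0 \<Longrightarrow> x \<in> span {w} \<Longrightarrow> F x = 0"
  using real_vector.linear_eq_0_on_span[of F "{w}" x] by auto



lemma SS_split: "finite I \<Longrightarrow> J \<subseteq> I \<Longrightarrow> SS I v f = SS J v f + SS (I - J) v f"
  unfolding SS_def by (simp add: sum.subset_diff)

lemma upper:
  fixes I J :: "'i set" and v :: "'i \<Rightarrow> 'a::real_vector" and w :: 'a
  assumes fin: "finite I" and JI: "J \<subseteq> I" and Jw: "\<forall>i\<in>J. v i \<in> span {w}"
    and nJ: "\<forall>i\<in>I-J. v i \<notin> span {w}"
  shows "DD J v + DD_quot I v J \<le> DD I v"
proof -
  have finJ: "finite J" using fin JI finite_subset by blast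
  have finIJ: "finite (I - J)" using fin by simp
  obtain k where k: "linear k" "DD J v = imbalance J v k" using DD_ex[OF finJ] by blast
  define k1 where "k1 = (if SS J v k \<ge> 0 then k else (\<lambda>x. - k x))"
  have k1: "linear k1" "SS J v k1 = DD J v"
    using k imb_SS[OF finJ, of v k] SS_neg[of J v k]
    by (auto simp: k1_def linear_compose_neg)
  obtain g where g: "linear g" "\<forall>x\<in>span (v ` J). g x = 0" "DD_quot I v J = imbalance (I - J) v g"
    using DDq_ex[OF fin, of v J] by blast
  define g1 where "g1 = (if SS (I - J) v g \<ge> 0 then g else (\<lambda>x. - g x))"
  have g1: "linear g1" "\<forall>x\<in>span (v ` J). g1 x = 0" "SS (I - J) v g1 = DD_quot I v J"
    using g imb_SS[OF finIJ, of v g] SS_neg[of "I - J" v g]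
    by (auto simp: g1_def linear_compose_neg)
  have "\<exists>F::'a\<Rightarrow>real. (linear F \<and> F w = 0) \<and> (\<forall>x\<in>v ` (I - J). F x \<noteq> 0)"
  proof (rule avoid[where Q="\<lambda>F. linear F \<and> F w = 0"])
    show "finite (v ` (I - J))" using finIJ by simp
    show "linear (\<lambda>x::'a. 0::real) \<and> (0::real) = 0" by (simp add: linear_zero)
    show "linear (\<lambda>x. F x + c * G x) \<and> F w + c * G w = 0"
      if "linear F \<and> F w = 0" "linear G \<and> G w = 0" for F G and c :: real
      using that lin_comb[of F G c] by auto
    show "\<forall>x\<in>v ` (I - J). \<exists>F::'a\<Rightarrow>real. (linear F \<and> F w = 0) \<and> F x \<noteq> 0"
    proof
      fix x assume "x \<in> v ` (I - J)"
      then obtain i where "i \<in> I - J" "x = v i" by blast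
      then have "x \<notin> span {w}" using nJ by blast
      from ex_fun[OF this] show "\<exists>F::'a\<Rightarrow>real. (linear F \<and> F w = 0) \<and> F x \<noteq> 0" by blast
    qed
  qed
  then obtain F0 :: "'a \<Rightarrow> real" where F0: "linear F0" "F0 w = 0" "\<forall>i\<in>I - J. F0 (v i) \<noteq> 0" by blast
  define T0 where "T0 = (\<Sum>i\<in>I - J. if g1 (v i) = 0 then sgi (F0 (v i)) else 0)"
  define F1 where "F1 = (if T0 \<ge> 0 then F0 else (\<lambda>x. - F0 x))"
  define T1 where "T1 = (\<Sum>i\<in>I - J. if g1 (v i) = 0 then sgi (F1 (v i)) else 0)"
  have F1: "linear F1" "F1 w = 0" "\<forall>i\<in>I - J. F1 (v i) \<noteq> 0"
    using F0 by (auto simp: F1_def linear_compose_neg)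
  have "T1 = (if T0 \<ge> 0 then T0 else - T0)"
    unfolding T1_def T0_def F1_def by (auto simp: sgi_neg sum_negf[symmetric] intro: sum.cong)
  then have T1: "T1 \<ge> 0" by auto
  have F1J: "\<forall>i\<in>J. F1 (v i) = 0"
  proof
    fix i assume "i \<in> J"
    then show "F1 (v i) = 0" using zero_on_span[OF F1(1) F1(2)] Jw by blast
  qed
  have g1J: "\<forall>i\<in>J. g1 (v i) = 0"
  proof
    fix i assume "i \<in> J"
    then have "v i \<in> span (v ` J)" by (intro span_base) blast
    then show "g1 (v i) = 0" using g1(2) by blast
  qed
  obtain \<delta> where \<delta>: "\<delta> > 0" "\<forall>i\<in>I. F1 (v i) \<noteq> 0 \<longrightarrow> \<delta> * \<bar>k1 (v i)\<bar> < \<bar>F1 (v i)\<bar>"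
    using perturb_eps[OF fin, of F1 v k1] by blast
  define m where "m = (\<lambda>x. F1 x + \<delta> * k1 x)"
  have m: "linear m" unfolding m_def using lin_comb F1(1) k1(1) by blast
  obtain \<epsilon> where \<epsilon>: "\<epsilon> > 0" "\<forall>i\<in>I. g1 (v i) \<noteq> 0 \<longrightarrow> \<epsilon> * \<bar>m (v i)\<bar> < \<bar>g1 (v i)\<bar>"
    using perturb_eps[OF fin, of g1 v m] by blast
  define h where "h = (\<lambda>x. g1 x + \<epsilon> * m x)"
  have h: "linear h" unfolding h_def using lin_comb g1(1) m by blast
  have hs: "sgi (h (v i)) = (if g1 (v i) \<noteq> 0 then sgi (g1 (v i)) else sgi (m (v i)))" if "i \<in> I" for i
    unfolding h_def using sgi_pert[of \<epsilon> "g1 (v i)" "m (v i)"] \<epsilon> that by blast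
  have ms: "sgi (m (v i)) = (if F1 (v i) \<noteq> 0 then sgi (F1 (v i)) else sgi (k1 (v i)))" if "i \<in> I" for i
    unfolding m_def using sgi_pert[of \<delta> "F1 (v i)" "k1 (v i)"] \<delta> that by blast
  have "SS J v h = SS J v k1"
    unfolding SS_def using hs ms F1J g1J JI by (intro sum.cong) auto
  moreover have "SS (I - J) v h = SS (I - J) v g1 + T1"
  proof -
    have "SS (I - J) v h = (\<Sum>i\<in>I - J. sgi (g1 (v i)) + (if g1 (v i) = 0 then sgi (F1 (v i)) else 0))"
      unfolding SS_def using hs ms F1(3) by (intro sum.cong) auto
    then show ?thesis unfolding SS_def T1_def by (simp add: sum.distrib)
  qed
  ultimately have "SS I v h = DD J v + DD_quot I v J + T1"
    using SS_split[OF fin JI, of v h] k1 g1 by simp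
  moreover have "SS I v h \<le> DD I v"
    using DD_ge[OF fin h, of v] imb_SS[OF fin, of v h] by linarith
  ultimately show ?thesis using T1 by linarith
qed



lemma span0: "span {0::'a::real_vector} = {0}"
  by (metis span_empty span_insert_0)

lemma nonzero_fun: "(x::'a::real_vector) \<noteq> 0 \<Longrightarrow> \<exists>F::'a\<Rightarrow>real. linear F \<and> F x \<noteq> 0"
  using ex_fun[of x 0] span0 by auto

lemma avoid_lin:
  fixes S :: "'a::real_vector set"
  assumes "finite S" "0 \<notin> S"
  shows "\<exists>F::'a\<Rightarrow>real. linear F \<and> (\<forall>x\<in>S. F x \<noteq> 0)"
proof (rule avoid[where Q="\<lambda>F. linear F"])
  show "finite S" by fact
  show "linear (\<lambda>x::'a. 0::real)" by (simp add: linear_zero)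
  show "linear (\<lambda>x. F x + c * G x)" if "linear F" "linear G" for F G :: "'a \<Rightarrow> real" and c :: real
    using that lin_comb by blast
  show "\<forall>x\<in>S. \<exists>F::'a\<Rightarrow>real. linear F \<and> F x \<noteq> 0"
  proof
    fix x assume "x \<in> S"
    then have "x \<noteq> 0" using assms by blast
    then show "\<exists>F::'a\<Rightarrow>real. linear F \<and> F x \<noteq> 0" by (rule nonzero_fun)
  qed
qed

lemma tope:
  fixes I :: "'i set" and v :: "'i \<Rightarrow> 'a::real_vector"
  assumes fin: "finite I"
  shows "\<exists>f::'a\<Rightarrow>real. linear f \<and> SS I v f = DD I v \<and> (\<forall>i\<in>I. v i \<noteq> 0 \<longrightarrow> f (v i) \<noteq> 0)"
proof -
  obtain f0 :: "'a \<Rightarrow> real" where f0: "linear f0" "DD I v = imbalance I v f0" using DD_ex[OF fin] by blast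
  define f1 where "f1 = (if SS I v f0 \<ge> 0 then f0 else (\<lambda>x. - f0 x))"
  have f1: "linear f1" "SS I v f1 = DD I v"
    using f0 imb_SS[OF fin, of v f0] SS_neg[of I v f0]
    by (auto simp: f1_def linear_compose_neg)
  have "finite (v ` {i\<in>I. v i \<noteq> 0})" "0 \<notin> v ` {i\<in>I. v i \<noteq> 0}" using fin by auto
  from avoid_lin[OF this] obtain q :: "'a \<Rightarrow> real" where q: "linear q" "\<forall>i\<in>I. v i \<noteq> 0 \<longrightarrow> q (v i) \<noteq> 0"
    by blast
  obtain \<epsilon> where \<epsilon>: "\<epsilon> > 0" "\<forall>i\<in>I. f1 (v i) \<noteq> 0 \<longrightarrow> \<epsilon> * \<bar>q (v i)\<bar> < \<bar>f1 (v i)\<bar>"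
    using perturb_eps[OF fin, of f1 v q] by blast
  define fp where "fp = (\<lambda>x. f1 x + \<epsilon> * q x)"
  define fm where "fm = (\<lambda>x. f1 x + \<epsilon> * (- q x))"
  have lfp: "linear fp" unfolding fp_def using lin_comb f1(1) q(1) by blast
  have lfm: "linear fm" unfolding fm_def using lin_comb[of f1 "\<lambda>x. - q x" \<epsilon>] f1(1) q(1)
    by (simp add: linear_compose_neg)
  define T where "T = (\<Sum>i\<in>I. if f1 (v i) = 0 then sgi (q (v i)) else 0)"
  have sp: "sgi (fp (v i)) = sgi (f1 (v i)) + (if f1 (v i) = 0 then sgi (q (v i)) else 0)" if "i \<in> I" for i
    unfolding fp_def using sgi_pert[of \<epsilon> "f1 (v i)" "q (v i)"] \<epsilon> that by auto
  have sm: "sgi (fm (v i)) = sgi (f1 (v i)) - (if f1 (v i) = 0 then sgi (q (v i)) else 0)" if "i \<in> I" for i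
    unfolding fm_def using sgi_pert[of \<epsilon> "f1 (v i)" "- q (v i)"] \<epsilon> that by (auto simp: sgi_neg)
  have "SS I v fp = SS I v f1 + T"
    unfolding SS_def T_def using sp by (simp add: sum.distrib[symmetric])
  moreover have "SS I v fm = SS I v f1 - T"
    unfolding SS_def T_def using sm by (simp add: sum_subtractf[symmetric])
  moreover have "SS I v fp \<le> DD I v"
    using DD_ge[OF fin lfp, of v] imb_SS[OF fin, of v fp] by linarith
  moreover have "SS I v fm \<le> DD I v"
    using DD_ge[OF fin lfm, of v] imb_SS[OF fin, of v fm] by linarith
  ultimately have "SS I v fp = DD I v" using f1 by linarith
  moreover have "\<forall>i\<in>I. v i \<noteq> 0 \<longrightarrow> fp (v i) \<noteq> 0"
  proof (intro ballI impI)
    fix i assume i: "i \<in> I" "v i \<noteq> 0"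
    have "sgi (fp (v i)) = (if f1 (v i) \<noteq> 0 then sgi (f1 (v i)) else sgi (q (v i)))"
      unfolding fp_def using sgi_pert[of \<epsilon> "f1 (v i)" "q (v i)"] \<epsilon> i by blast
    then have "sgi (fp (v i)) \<noteq> 0" using q i by auto
    then show "fp (v i) \<noteq> 0" by auto
  qed
  ultimately show ?thesis using lfp by blast
qed



theorem mainTheorem14:
  fixes I :: "'i set" and v :: "'i \<Rightarrow> 'a::real_vector"
  assumes "finite I"
    and "DD I v > 0"
  shows "\<exists>J. J \<subseteq> I \<and> config_rank J v = 1
           \<and> {i\<in>I. v i \<in> span (v ` J)} = J
           \<and> DD J v > 0
           \<and> DD I v = DD J v + DD_quot I v J"
proof -
  note fin = assms(1)
  define U where "U = {i\<in>I. v i \<noteq> 0}"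
  have finU: "finite U" "U \<subseteq> I" using fin by (auto simp: U_def)
  obtain f :: "'a \<Rightarrow> real" where f: "linear f" "SS I v f = DD I v" "\<forall>i\<in>U. f (v i) \<noteq> 0"
    using tope[OF fin, of v] unfolding U_def by blast
  define d where "d i j = (1 / f (v i)) *\<^sub>R v i - (1 / f (v j)) *\<^sub>R v j" for i j
  define DS where "DS = {d i j | i j. i \<in> U \<and> j \<in> U \<and> d i j \<noteq> 0}"
  have "DS \<subseteq> (\<lambda>(i, j). d i j) ` (U \<times> U)" unfolding DS_def by auto
  then have "finite DS" using finU by (auto intro: finite_subset)
  moreover have "0 \<notin> DS" unfolding DS_def by auto
  ultimately obtain p :: "'a \<Rightarrow> real" where p: "linear p" "\<forall>x\<in>DS. p x \<noteq> 0"
    using avoid_lin by blast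
  define \<rho> where "\<rho> i = p (v i) / f (v i)" for i
  have pd: "p (d i j) = \<rho> i - \<rho> j" for i j
    unfolding d_def \<rho>_def using linear_diff[OF p(1)] linear_scale[OF p(1)] by simp
  have key: "\<rho> i = \<rho> j \<longleftrightarrow> v j \<in> span {v i}" if ij: "i \<in> U" "j \<in> U" for i j
  proof
    assume "\<rho> i = \<rho> j"
    then have "p (d i j) = 0" using pd by simp
    then have "d i j = 0" using p(2) ij unfolding DS_def by blast
    then have eq: "(1 / f (v i)) *\<^sub>R v i = (1 / f (v j)) *\<^sub>R v j" unfolding d_def by simp
    have "v j = f (v j) *\<^sub>R ((1 / f (v j)) *\<^sub>R v j)" using f(3) ij by simp
    also have "\<dots> = f (v j) *\<^sub>R ((1 / f (v i)) *\<^sub>R v i)" using eq by simp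
    finally have "v j = (f (v j) * (1 / f (v i))) *\<^sub>R v i" by simp
    then show "v j \<in> span {v i}" by (metis span_base span_scale singletonI)
  next
    assume "v j \<in> span {v i}"
    then obtain a where a: "v j = a *\<^sub>R v i" by (auto simp: span_singleton)
    have "a \<noteq> 0" using a ij unfolding U_def by auto
    have "f (v j) = a * f (v i)" "p (v j) = a * p (v i)"
      using a linear_scale[OF f(1)] linear_scale[OF p(1)] by auto
    then show "\<rho> i = \<rho> j" unfolding \<rho>_def using \<open>a \<noteq> 0\<close> by simp
  qed
  define \<sigma> where "\<sigma> c = (\<Sum>i\<in>{i\<in>U. \<rho> i = c}. sgi (f (v i)))" for c
  have SU: "SS I v f = (\<Sum>i\<in>U. sgi (f (v i)))"
  proof -
    have "SS I v f = (\<Sum>i\<in>U. sgi (f (v i))) + (\<Sum>i\<in>I - U. sgi (f (v i)))"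
      unfolding SS_def using sum.subset_diff[OF finU(2) fin, of "\<lambda>i. sgi (f (v i))"] by (simp add: add.commute)
    moreover have "(\<Sum>i\<in>I - U. sgi (f (v i))) = 0"
      by (rule sum.neutral) (auto simp: U_def linear_0[OF f(1)])
    ultimately show ?thesis by simp
  qed
  have Ssig: "(\<Sum>i\<in>U. sgi (f (v i))) = (\<Sum>c\<in>\<rho> ` U. \<sigma> c)"
    unfolding \<sigma>_def by (rule sum.image_gen[OF finU(1)])
  define C where "C = {c\<in>\<rho> ` U. \<sigma> c > 0}"
  have finC: "finite C" unfolding C_def using finU by auto
  have neC: "C \<noteq> {}"
  proof
    assume "C = {}"
    then have "\<forall>c\<in>\<rho> ` U. \<sigma> c \<le> 0" unfolding C_def by auto
    then have "(\<Sum>c\<in>\<rho> ` U. \<sigma> c) \<le> 0" by (intro sum_nonpos) blast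
    then show False using SU Ssig f(2) assms(2) by linarith
  qed
  define cs where "cs = Min C"
  have csC: "cs \<in> C" unfolding cs_def using Min_in[OF finC neC] .
  have below: "\<sigma> c \<le> 0" if "c \<in> \<rho> ` U" "c < cs" for c
  proof (rule ccontr)
    assume "\<not> \<sigma> c \<le> 0"
    then have "c \<in> C" using that unfolding C_def by auto
    then have "cs \<le> c" unfolding cs_def using Min_le[OF finC] by blast
    then show False using that by linarith
  qed
  obtain i0 where i0: "i0 \<in> U" "\<rho> i0 = cs" using csC unfolding C_def by auto
  have sigpos: "\<sigma> cs > 0" using csC unfolding C_def by auto
  define w where "w = v i0"
  have w0: "w \<noteq> 0" using i0 unfolding w_def U_def by auto
  define J where "J = {i\<in>I. v i \<in> span {w}}"
  have JI: "J \<subseteq> I" unfolding J_def by auto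
  have JU: "i \<in> J \<longleftrightarrow> \<rho> i = cs" if "i \<in> U" for i
    using key[OF i0(1) that] i0(2) that finU(2) unfolding J_def w_def by auto
  have nonU: "i \<in> J" if "i \<in> I" "i \<notin> U" for i
    using that unfolding J_def U_def by (auto simp: span_zero)
  have i0J: "i0 \<in> J" using JU[OF i0(1)] i0(2) by simp
  have spanJ: "span (v ` J) = span {w}"
  proof
    show "span (v ` J) \<subseteq> span {w}"
      by (rule span_minimal) (auto simp: J_def subspace_span)
    show "span {w} \<subseteq> span (v ` J)"
      by (rule span_mono) (use i0J w_def in auto)
  qed
  have rank: "config_rank J v = 1"
    unfolding config_rank_def spanJ using w0 real_vector.dim_eq_card_independent[of "{w}"] by simp
  have closed: "{i\<in>I. v i \<in> span (v ` J)} = J"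
    by (simp only: spanJ) (simp add: J_def)
  define h where "h = (\<lambda>x. p x + (- cs) * f x)"
  have lh: "linear h" unfolding h_def using lin_comb p(1) f(1) by blast
  have hw: "h w = 0"
  proof -
    have "f w \<noteq> 0" using f(3) i0(1) unfolding w_def by blast
    then have "p w = cs * f w" using i0(2) unfolding \<rho>_def w_def by (simp add: field_simps)
    then show ?thesis unfolding h_def by simp
  qed
  have hq: "\<forall>x\<in>span (v ` J). h x = 0"
    unfolding spanJ using zero_on_span[OF lh hw] by blast
  have hv: "sgi (h (v i)) = sgi (f (v i)) * sgi (\<rho> i - cs)" if "i \<in> U" for i
  proof -
    have "f (v i) \<noteq> 0" using f(3) that by blast
    then have "h (v i) = f (v i) * (\<rho> i - cs)" unfolding h_def \<rho>_def by (simp add: field_simps)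
    then show ?thesis by (simp add: sgi_mult)
  qed
  have IJU: "I - J \<subseteq> U" using nonU by blast
  define L where "L = {i\<in>U. \<rho> i < cs}"
  have finL: "finite L" using finU unfolding L_def by auto
  have LIJ: "{i\<in>I - J. \<rho> i < cs} = L"
    unfolding L_def using IJU JU finU(2) by auto
  have Aneg: "(\<Sum>i\<in>L. sgi (f (v i))) \<le> 0"
  proof -
    have "(\<Sum>i\<in>L. sgi (f (v i))) = (\<Sum>c\<in>\<rho> ` L. (\<Sum>i\<in>{i\<in>L. \<rho> i = c}. sgi (f (v i))))"
      by (rule sum.image_gen[OF finL])
    also have "\<dots> = (\<Sum>c\<in>\<rho> ` L. \<sigma> c)"
    proof (rule sum.cong)
      fix c assume "c \<in> \<rho> ` L"
      then have "c < cs" unfolding L_def by auto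
      then have "{i\<in>L. \<rho> i = c} = {i\<in>U. \<rho> i = c}" unfolding L_def by auto
      then show "(\<Sum>i\<in>{i\<in>L. \<rho> i = c}. sgi (f (v i))) = \<sigma> c" unfolding \<sigma>_def by simp
    qed simp
    also have "\<dots> \<le> 0"
    proof (rule sum_nonpos)
      fix c assume "c \<in> \<rho> ` L"
      then show "\<sigma> c \<le> 0" using below unfolding L_def by auto
    qed
    finally show ?thesis .
  qed
  have ES: "{i\<in>U. \<rho> i = cs} \<subseteq> U" by auto
  have UJ: "U - {i\<in>U. \<rho> i = cs} = I - J" using JU IJU finU(2) by auto
  have BIJ: "(\<Sum>i\<in>I - J. sgi (f (v i))) = DD I v - \<sigma> cs"
  proof -
    have "(\<Sum>i\<in>U. sgi (f (v i))) = (\<Sum>i\<in>U - {i\<in>U. \<rho> i = cs}. sgi (f (v i))) + \<sigma> cs"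
      unfolding \<sigma>_def using sum.subset_diff[OF ES finU(1), of "\<lambda>i. sgi (f (v i))"] by simp
    then show ?thesis using UJ SU f(2) by simp
  qed
  have SIJh: "SS (I - J) v h = (\<Sum>i\<in>I - J. sgi (f (v i))) - 2 * (\<Sum>i\<in>I - J. if \<rho> i < cs then sgi (f (v i)) else 0)"
  proof -
    have "SS (I - J) v h = (\<Sum>i\<in>I - J. sgi (f (v i)) - 2 * (if \<rho> i < cs then sgi (f (v i)) else 0))"
      unfolding SS_def
    proof (rule sum.cong)
      fix i assume i: "i \<in> I - J"
      then have "i \<in> U" using IJU by blast
      moreover have "\<rho> i \<noteq> cs" using JU[OF \<open>i \<in> U\<close>] i by auto
      ultimately show "sgi (h (v i)) = sgi (f (v i)) - 2 * (if \<rho> i < cs then sgi (f (v i)) else 0)"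
        using hv by (auto simp: sgi_def)
    qed simp
    then show ?thesis by (simp add: sum_subtractf sum_distrib_left)
  qed
  have "(\<Sum>i\<in>I - J. if \<rho> i < cs then sgi (f (v i)) else 0) = (\<Sum>i\<in>L. sgi (f (v i)))"
    using sum.inter_filter[of "I - J" "\<lambda>i. sgi (f (v i))" "\<lambda>i. \<rho> i < cs"] fin LIJ by simp
  then have SIJ: "SS (I - J) v h \<ge> DD I v - \<sigma> cs" using SIJh BIJ Aneg by linarith
  have Q: "DD_quot I v J \<ge> DD I v - \<sigma> cs"
    using DDq_ge[OF fin lh hq] imb_SS[of "I - J" v h] fin SIJ by simp
  have "SS J v f = \<sigma> cs"
    using SS_split[OF fin JI, of v f] f(2) BIJ unfolding SS_def by simp
  then have P: "DD J v \<ge> \<sigma> cs"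
    using DD_ge[OF _ f(1), of J v] imb_SS[of J v f] fin JI finite_subset by fastforce
  have up: "DD J v + DD_quot I v J \<le> DD I v"
    by (rule upper[OF fin JI, of v w]) (auto simp: J_def)
  show ?thesis
    using JI rank closed P Q up sigpos by (intro exI[of _ J]) auto
qed


end
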